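(* Let $d,\tilde d\in\mathbb{R}^m$ with $d,\tilde d>0$ and $\ell,\tilde\ell\in\mathbb{R}^m$ with $f(d,\ell)>0$ and $f(\tilde d,\tilde\ell)>0$. Let $j\in\{1,\dots,m\}$ and suppose $$\frac{1}{f(\tilde d,\tilde\ell)}\tilde d=\alpha\Big(\frac{1}{f(d,\ell)}d+\frac{2}{m-1}\frac{1}{\gamma_j(d,\ell)^2}e_j\Big)$$ for some scalar $\alpha\ge\frac{m^2-1}{m^2}$. Then $\mathrm{vol}\,E(\tilde d,\tilde\ell)\le e^{-\frac{1}{2(m+1)}}\mathrm{vol}\,E(d,\ell)$.
   Context: Standing assumption: $A=[a_1|\cdots|a_m]\in\mathbb{R}^{n\times m}$ has columns of unit Euclidean norm and $\{A\lambda:\lambda\ge0\}=\mathbb{R}^n$ (so $m>n\ge1$); $u\in\mathbb{R}^m$. $D=\mathrm{diag}(d)$; $r(\ell)=\tfrac12(u+\ell)$, $v(\ell)=\tfrac12(u-\ell)$, $B(d)=ADA^\top$, $y(d,\ell)=B(d)^{-1}ADr(\ell)$, $t(d,\ell)=A^\top y(d,\ell)-r(\ell)$, $f(d,\ell)=v(\ell)^\top Dv(\ell)-t(d,\ell)^\top Dt(d,\ell)$, $\gamma_i(d,\ell)=\sqrt{f(d,\ell)a_i^\top B(d)^{-1}a_i}$. $E(d,\ell)=\{x:(A^\top x-\ell)^\top D(A^\top x-u)\le0\}$, and its (relative) volume is defined as $\mathrm{vol}\,E(d,\ell):=f(d,\ell)^{n/2}/\sqrt{\det(ADA^\top)}$.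 *)

theory Defs
  imports "HOL-Analysis.Analysis"
begin

text \<open>Setting: A is an n x m real matrix (n = CARD('n), m = CARD('m)), columns a_i = column i A.\<close>

definition diagm :: "real^'m \<Rightarrow> real^'m^'m" where
  "diagm d = (\<chi> i k. if i = k then d $ i else 0)"

definition rr :: "real^'m \<Rightarrow> real^'m \<Rightarrow> real^'m" where
  "rr u l = (1/2) *\<^sub>R (u + l)"

definition vv :: "real^'m \<Rightarrow> real^'m \<Rightarrow> real^'m" where
  "vv u l = (1/2) *\<^sub>R (u - l)"

definition BB :: "real^'m^'n \<Rightarrow> real^'m \<Rightarrow> real^'n^'n" where
  "BB A d = A ** diagm d ** transpose A"

definition yy :: "real^'m^'n \<Rightarrow> real^'m \<Rightarrow> real^'m \<Rightarrow> real^'m \<Rightarrow> real^'n" where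
  "yy A u d l = matrix_inv (BB A d) *v (A *v (diagm d *v rr u l))"

definition tt :: "real^'m^'n \<Rightarrow> real^'m \<Rightarrow> real^'m \<Rightarrow> real^'m \<Rightarrow> real^'m" where
  "tt A u d l = transpose A *v yy A u d l - rr u l"

definition ff :: "real^'m^'n \<Rightarrow> real^'m \<Rightarrow> real^'m \<Rightarrow> real^'m \<Rightarrow> real" where
  "ff A u d l = vv u l \<bullet> (diagm d *v vv u l) - tt A u d l \<bullet> (diagm d *v tt A u d l)"

definition gam :: "real^'m^'n \<Rightarrow> real^'m \<Rightarrow> real^'m \<Rightarrow> real^'m \<Rightarrow> 'm \<Rightarrow> real" where
  "gam A u d l i = sqrt (ff A u d l * (column i A \<bullet> (matrix_inv (BB A d) *v column i A)))"

definition ellE :: "real^'m^'n \<Rightarrow> real^'m \<Rightarrow> real^'m \<Rightarrow> real^'m \<Rightarrow> (real^'n) set" where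
  "ellE A u d l = {x. (transpose A *v x - l) \<bullet> (diagm d *v (transpose A *v x - u)) \<le> 0}"

text \<open>Relative volume of E(d,l).\<close>
definition volE :: "real^'m^'n \<Rightarrow> real^'m \<Rightarrow> real^'m \<Rightarrow> real^'m \<Rightarrow> real" where
  "volE A u d l = ff A u d l powr (real CARD('n) / 2) / sqrt (det (BB A d))"

end

theory Submission
  imports Defs
begin


lemma det_rows_add_multiple:
  fixes Q :: "real^'n^'n"
  assumes "finite S" "k \<notin> S"
  shows "det (\<chi> i. if i \<in> S then row i Q + c i *s row k Q else row i Q) = det Q"
  using assms
proof (induction S rule: finite_induct)
  case empty
  then show ?case by (simp add: row_def vec_lambda_eta)
next
  case (insert s S)
  define Q' where "Q' = (\<chi> i. if i \<in> S then row i Q + c i *s row k Q else row i Q)"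
  have sk: "s \<noteq> k" using insert by auto
  have "(\<chi> i. if i \<in> insert s S then row i Q + c i *s row k Q else row i Q)
     = (\<chi> i. if i = s then row s Q' + c s *s row k Q' else row i Q')"
    using insert by (auto simp: Q'_def row_def vec_eq_iff)
  also have "det \<dots> = det Q'" by (rule det_row_operation[OF sk])
  also have "\<dots> = det Q" using insert Q'_def by simp
  finally show ?case .
qed

lemma det_rank1_partial:
  fixes M :: "real^'n^'n"
  assumes "finite S"
  shows "det (\<chi> i. if i \<in> S then row i M + u$i *s w else row i M)
       = det M + (\<Sum>i\<in>S. u$i * det (\<chi> r. if r = i then w else row r M))"
  using assms
proof (induction S rule: finite_induct)
  case empty
  then show ?case by (simp add: row_def vec_lambda_eta)
next
  case (insert k S)
  define X where "X = (\<lambda>i. if i \<in> S then row i M + u$i *s w else row i M)"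
  have "det (\<chi> i. if i \<in> insert k S then row i M + u$i *s w else row i M)
     = det (\<chi> i. if i = k then row k M + u$k *s w else X i)"
    using insert by (intro arg_cong[where f=det]) (auto simp: X_def vec_eq_iff)
  also have "\<dots> = det (\<chi> i. if i = k then row k M else X i) + det (\<chi> i. if i = k then u$k *s w else X i)"
    by (rule det_row_add)
  also have "det (\<chi> i. if i = k then row k M else X i) = det (\<chi> i. if i \<in> S then row i M + u$i *s w else row i M)"
    using insert by (intro arg_cong[where f=det]) (auto simp: X_def vec_eq_iff)
  also have "det (\<chi> i. if i = k then u$k *s w else X i) = u$k * det (\<chi> i. if i = k then w else X i)"
    by (rule det_row_mul)
  also have "det (\<chi> i. if i = k then w else X i) = det (\<chi> r. if r = k then w else row r M)"
  proof -
    define Q where "Q = (\<chi> r. if r = k then w else row r M)"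
    have "(\<chi> i. if i = k then w else X i) = (\<chi> i. if i \<in> S then row i Q + u$i *s row k Q else row i Q)"
      using insert by (auto simp: X_def Q_def row_def vec_eq_iff)
    then show ?thesis using det_rows_add_multiple[of S k Q "\<lambda>i. u$i"] insert Q_def by simp
  qed
  finally show ?case using insert by (simp add: algebra_simps)
qed

lemma matrix_inv_props:
  fixes A :: "real^'n^'n"
  assumes "invertible A"
  shows "A ** matrix_inv A = mat 1" "matrix_inv A ** A = mat 1"
proof -
  have "\<exists>A'. A ** A' = mat 1 \<and> A' ** A = mat 1" using assms by (simp add: invertible_def)
  from someI_ex[OF this] show "A ** matrix_inv A = mat 1" "matrix_inv A ** A = mat 1"
    unfolding matrix_inv_def by auto
qed

lemma det_rank1:
  fixes M :: "real^'n^'n"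
  assumes "invertible M"
  shows "det (\<chi> i. row i M + u$i *s w) = det M * (1 + u \<bullet> (matrix_inv (transpose M) *v w))"
proof -
  define x where "x = matrix_inv (transpose M) *v w"
  have it: "invertible (transpose M)" using assms by (simp add: invertible_det_nz)
  have "transpose M *v x = w" unfolding x_def
    using it by (simp only: matrix_vector_mul_assoc matrix_inv_props matrix_vector_mul_lid)
  hence w: "w = (\<Sum>i\<in>UNIV. x$i *s row i M)"
    by (simp only: matrix_mult_sum column_transpose)
  have "det (\<chi> i. row i M + u$i *s w) = det (\<chi> i. if i \<in> UNIV then row i M + u$i *s w else row i M)"
    by simp
  also have "\<dots> = det M + (\<Sum>i\<in>UNIV. u$i * det (\<chi> r. if r = i then w else row r M))"
    by (rule det_rank1_partial) simp
  also have "\<dots> = det M + (\<Sum>i\<in>UNIV. u$i * (x$i * det M))"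
    unfolding w by (subst cramer_lemma_transpose) simp
  also have "\<dots> = det M * (1 + u \<bullet> x)"
    by (simp add: inner_vec_def sum_distrib_left sum_distrib_right algebra_simps)
  finally show ?thesis unfolding x_def .
qed



lemma posdef_det_nz:
  fixes M :: "real^'n^'n"
  assumes "\<And>x. x \<noteq> 0 \<Longrightarrow> x \<bullet> (M *v x) > 0"
  shows "det M \<noteq> 0"
proof -
  have "inj ((*v) M)"
  proof (rule injI)
    fix x y assume "M *v x = M *v y"
    hence "M *v (x - y) = 0" by (simp add: matrix_vector_mult_diff_distrib)
    thus "x = y" using assms[of "x - y"] by (cases "x - y = 0") auto
  qed
  thus ?thesis using det_nz_iff_inj[of "(*v) M"] by (simp add: matrix_of_matrix_vector_mul)
qed

lemma cont_det:
  fixes F :: "real \<Rightarrow> real^'n^'n"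
  assumes "\<And>i k. continuous_on S (\<lambda>t. F t $ i $ k)"
  shows "continuous_on S (\<lambda>t. det (F t))"
  unfolding det_def
  by (intro continuous_intros assms)

lemma posdef_det_pos:
  fixes M :: "real^'n^'n"
  assumes pd: "\<And>x. x \<noteq> 0 \<Longrightarrow> x \<bullet> (M *v x) > 0"
  shows "det M > 0"
proof (rule ccontr)
  assume "\<not> det M > 0"
  hence neg: "det M \<le> 0" by simp
  define F where "F = (\<lambda>t::real. t *\<^sub>R mat 1 + (1 - t) *\<^sub>R M)"
  have c: "continuous_on {0..1} (\<lambda>t. det (F t))"
    by (rule cont_det) (auto simp: F_def intro!: continuous_intros)
  have "det (F 0) \<le> 0" "0 \<le> det (F 1)" using neg by (auto simp: F_def)
  then obtain t where t: "0 \<le> t" "t \<le> 1" "det (F t) = 0"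
    using IVT'[of "\<lambda>t. det (F t)" 0 0 1] c by auto
  have "det (F t) \<noteq> 0"
  proof (rule posdef_det_nz)
    fix x :: "real^'n" assume x: "x \<noteq> 0"
    have "F t *v x = t *\<^sub>R x + (1 - t) *\<^sub>R (M *v x)"
      by (simp add: F_def matrix_vector_mult_add_rdistrib scaleR_matrix_vector_assoc[symmetric])
    hence "x \<bullet> (F t *v x) = t * (x \<bullet> x) + (1 - t) * (x \<bullet> (M *v x))"
      by (simp add: inner_add_right)
    moreover have "x \<bullet> x > 0" using x by simp
    moreover have "x \<bullet> (M *v x) > 0" using pd x by simp
    ultimately show "x \<bullet> (F t *v x) > 0" using t
      by (smt (verit) mult_nonneg_nonneg mult_pos_pos)
  qed
  thus False using t by simp
qed


lemma ln_K:
  fixes m :: real assumes "m \<ge> 2"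
  shows "2 / m \<le> ln ((m + 1) / (m - 1))"
proof -
  define g where "g = (\<lambda>t::real. ln (1 + t) - ln (1 - t) - 2 * t)"
  have d: "(g has_real_derivative (1/(1+t) + 1/(1-t) - 2)) (at t)" if "0 \<le> t" "t < 1" for t
  proof -
    have "((\<lambda>t. ln (1 + t)) has_real_derivative 1/(1+t)) (at t)"
      using that by (auto intro!: derivative_eq_intros)
    moreover have "((\<lambda>t. ln (1 - t)) has_real_derivative -1/(1-t)) (at t)"
      using that by (auto intro!: derivative_eq_intros)
    ultimately show ?thesis unfolding g_def
      using that by (auto intro!: derivative_eq_intros)
  qed
  have "g 0 \<le> g (1/m)"
  proof (rule DERIV_nonneg_imp_nondecreasing[of 0 "1/m" g])
    show "0 \<le> 1/m" using assms by simp
    fix t assume t: "0 \<le> t" "t \<le> 1/m"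
    have "1/m < 1" using assms by simp
    hence t1: "t < 1" using t by linarith
    have "0 \<le> 1/(1+t) + 1/(1-t) - 2"
    proof -
      have "1/(1+t) + 1/(1-t) = 2 / (1 - t^2)" using t t1
        by (simp add: field_simps power2_eq_square)
      also have "\<dots> \<ge> 2"
      proof -
        have "t * t \<le> t * 1" using t t1 by (intro mult_left_mono) auto
        hence "0 < 1 - t^2" "1 - t^2 \<le> 1" using t t1 by (auto simp: power2_eq_square)
        thus ?thesis by (simp add: le_divide_eq)
      qed
      finally show ?thesis by simp
    qed
    thus "\<exists>y. (g has_real_derivative y) (at t) \<and> 0 \<le> y" using d[OF t(1) t1] by blast
  qed
  hence "2 / m \<le> ln (1 + 1/m) - ln (1 - 1/m)" by (simp add: g_def)
  also have "\<dots> = ln ((m + 1) / (m - 1))"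
  proof -
    have "1 + 1/m = (m+1)/m" "1 - 1/m = (m-1)/m" using assms by (auto simp: field_simps)
    thus ?thesis using assms by (simp add: ln_div)
  qed
  finally show ?thesis .
qed
lemma T1: "(m::real) \<ge> 2 \<Longrightarrow> 
   1 / (2 * (m + 1)) \<le> (m/2) * (- 1 / (m^2 - 1)) + (2/m) / 2"
proof -
  assume m2: "m \<ge> 2"
  define p where "p = m - 1"
  have p: "p \<ge> 1" "m = p + 1" using m2 by (auto simp: p_def)
  have e: "m^2 - 1 = p * (p + 2)" unfolding p(2) by (simp add: power2_eq_square algebra_simps)
  have "(m/2) * (- 1 / (m^2 - 1)) + (2/m) / 2 - 1 / (2 * (m + 1)) = (p - 1) / (2 * (p+1) * (p * (p + 2)))"
    unfolding e unfolding p(2) using p(1) by (simp add: divide_simps) (simp add: algebra_simps)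
  also have "\<dots> \<ge> 0" using p by simp
  finally show ?thesis by simp
qed
lemma final_ineq:
  fixes m n \<alpha> :: real
  assumes m2: "m \<ge> 2" and n: "0 \<le> n" "n \<le> m" and al: "\<alpha> \<ge> (m^2 - 1) / m^2"
  shows "exp (1 / (2 * (m + 1))) \<le> \<alpha> powr (n/2) * sqrt ((m + 1) / (m - 1))"
proof -
  define q where "q = (m^2 - 1) / m^2"
  have "2*2 \<le> m * m" using m2 by (intro mult_mono) auto
  hence m21: "m^2 - 1 > 0" by (simp add: power2_eq_square)
  have q0: "0 < q" using m21 m2 by (simp add: q_def)
  have q1: "q \<le> 1" using m2 by (simp add: q_def)
  have "q powr (m/2) \<le> q powr (n/2)"
    using q0 q1 n by (intro powr_mono') auto
  also have "\<dots> \<le> \<alpha> powr (n/2)" using q0 al n by (intro powr_mono2) (auto simp: q_def)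
  finally have A1: "q powr (m/2) \<le> \<alpha> powr (n/2)" .
  have lnq: "ln q \<ge> - 1 / (m^2 - 1)"
  proof -
    have "ln (1/q) \<le> 1/q - 1" using q0 by (intro ln_le_minus_one) simp
    also have "1/q - 1 = 1 / (m^2 - 1)"
    proof -
      have "m^2 - 1 \<noteq> 0" using m21 by simp
      thus ?thesis unfolding q_def by (simp add: divide_simps)
    qed
    finally show ?thesis using q0 by (simp add: ln_div)
  qed
  have lnK: "2 / m \<le> ln ((m + 1) / (m - 1))" by (rule ln_K[OF m2])
  have key: "1 / (2 * (m + 1)) \<le> (m/2) * ln q + ln ((m + 1) / (m - 1)) / 2"
  proof -
    have "(m/2) * ln q \<ge> (m/2) * (- 1 / (m^2 - 1))" using lnq m2 by (intro mult_left_mono) auto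
    moreover have "1 / (2 * (m + 1)) \<le> (m/2) * (- 1 / (m^2 - 1)) + (2/m) / 2" by (rule T1[OF m2])
    moreover have "(2/m) / 2 \<le> ln ((m + 1) / (m - 1)) / 2" using lnK by (intro divide_right_mono) auto
    ultimately show ?thesis by linarith
  qed
  have K0: "(m + 1) / (m - 1) > 0" using m2 by simp
  have "exp (1 / (2 * (m + 1))) \<le> exp ((m/2) * ln q + ln ((m + 1) / (m - 1)) / 2)"
    using key by simp
  also have "\<dots> = q powr (m/2) * sqrt ((m + 1) / (m - 1))"
  proof -
    have "exp ((m/2) * ln q) = q powr (m/2)" using q0 by (simp add: powr_def mult.commute)
    moreover have "exp (ln ((m + 1) / (m - 1)) / 2) = sqrt ((m + 1) / (m - 1))"
      using K0 m2 powr_half_sqrt[of "(m + 1) / (m - 1)"] by (simp add: powr_def mult.commute)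
    ultimately show ?thesis by (simp add: exp_add)
  qed
  also have "\<dots> \<le> \<alpha> powr (n/2) * sqrt ((m + 1) / (m - 1))"
    using A1 K0 by (intro mult_right_mono) auto
  finally show ?thesis .
qed


lemma BB_entry: "BB A d $ i $ k = (\<Sum>l\<in>UNIV. A$i$l * d$l * A$k$l)"
  by (simp add: BB_def diagm_def matrix_matrix_mult_def transpose_def if_distrib sum.delta' cong: if_cong)

lemma BB_sym: "transpose (BB A d) = BB A d"
  by (simp add: vec_eq_iff BB_entry transpose_def mult.commute mult.left_commute)

lemma BB_quad: "x \<bullet> (BB A d *v x) = (\<Sum>l\<in>UNIV. d$l * ((transpose A *v x)$l)^2)"
proof -
  define y where "y = transpose A *v x"
  have "BB A d *v x = A *v (diagm d *v y)" unfolding BB_def y_def by (simp only: matrix_vector_mul_assoc matrix_mul_assoc)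
  hence "x \<bullet> (BB A d *v x) = (x v* A) \<bullet> (diagm d *v y)" by (simp add: dot_lmul_matrix)
  also have "x v* A = y" unfolding y_def by (metis transpose_transpose vector_transpose_matrix)
  also have "y \<bullet> (diagm d *v y) = (\<Sum>l\<in>UNIV. d$l * (y$l)^2)"
  proof -
    have "\<And>i. (diagm d *v y) $ i = d$i * y$i"
      by (simp add: diagm_def matrix_vector_mult_def if_distrib[where f="\<lambda>z. z * _"] sum.delta cong: if_cong)
    thus ?thesis by (simp add: inner_vec_def power2_eq_square ac_simps)
  qed
  finally show ?thesis by (simp add: y_def)
qed

lemma det_scaleR_mat: "det (s *\<^sub>R (X::real^'n^'n)) = s ^ CARD('n) * det X"
proof -
  have "s *\<^sub>R X = (\<chi> i. s *s row i X)" by (simp add: vec_eq_iff row_def)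
  moreover have "(\<chi> i. row i X) = X" by (simp add: vec_eq_iff row_def)
  ultimately show ?thesis using det_rows_mul[of "\<lambda>i. s" "\<lambda>i. row i X"] by simp
qed


theorem lemma10:
  fixes A :: "real^'m^'n" and u d d' l l' :: "real^'m" and j :: 'm and \<alpha> :: real
  assumes unit_cols: "\<forall>i. norm (column i A) = 1"
    and cone: "{A *v lam | lam. \<forall>i. lam $ i \<ge> 0} = UNIV"
    and dpos: "\<forall>i. d $ i > 0" and d'pos: "\<forall>i. d' $ i > 0"
    and fpos: "ff A u d l > 0" and f'pos: "ff A u d' l' > 0"
    and upd: "(1 / ff A u d' l') *\<^sub>R d' =
       \<alpha> *\<^sub>R ((1 / ff A u d l) *\<^sub>R d
          + ((2 / (real CARD('m) - 1)) * (1 / (gam A u d l j)\<^sup>2)) *\<^sub>R axis j (1::real))"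
    and alpha: "\<alpha> \<ge> (real CARD('m) ^ 2 - 1) / real CARD('m) ^ 2"
  shows "volE A u d' l' \<le> exp (- 1 / (2 * (real CARD('m) + 1))) * volE A u d l"
proof -
  define a where "a = column j A"
  define B where "B = BB A d"
  define f where "f = ff A u d l"
  define f' where "f' = ff A u d' l'"
  have f0: "f > 0" "f' > 0" using fpos f'pos by (auto simp: f_def f'_def)
  have a_ne: "a \<noteq> 0" using unit_cols unfolding a_def by (metis norm_zero zero_neq_one)
  have surjA: "\<exists>lam. x = A *v lam" for x
  proof -
    have "x \<in> {A *v lam | lam. \<forall>i. lam $ i \<ge> 0}" using cone by simp
    thus ?thesis by blast
  qed
  have m2: "CARD('m) \<ge> 2"
  proof (rule ccontr)
    assume "\<not> 2 \<le> CARD('m)"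
    moreover have "CARD('m) > 0" by simp
    ultimately have c1: "CARD('m) = 1" by linarith
    have U: "UNIV = {j}"
      using c1 by (metis card_1_singletonE singletonD UNIV_I)
    have "-a \<in> {A *v lam | lam. \<forall>i. lam $ i \<ge> 0}" using cone by simp
    then obtain lam where lam: "-a = A *v lam" "\<forall>i. lam $ i \<ge> 0" by blast
    have "\<And>r. - a $ r = lam $ j * a $ r"
    proof -
      fix r
      have "(A *v lam) $ r = (\<Sum>i\<in>{j}. A $ r $ i * lam $ i)"
        by (simp add: matrix_vector_mult_def U[symmetric])
      thus "- a $ r = lam $ j * a $ r" using lam(1) by (simp add: a_def column_def vec_eq_iff)
    qed
    hence "\<And>r. (1 + lam $ j) * a $ r = 0" by (metis add.commute add_eq_0_iff distrib_right mult_1)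
    moreover have "1 + lam $ j \<noteq> 0" using lam(2) by (smt (verit))
    ultimately have "a = 0" by (simp add: vec_eq_iff)
    thus False using a_ne by simp
  qed
  have nm: "CARD('n) \<le> CARD('m)"
  proof -
    have "surj ((*v) A)" using surjA by (metis surjI)
    hence "rank A = CARD('n)" using full_rank_surjective by blast
    thus ?thesis using rank_bound[of A] by simp
  qed
  have pd: "x \<bullet> (B *v x) > 0" if x: "x \<noteq> 0" for x
  proof -
    define y where "y = transpose A *v x"
    have "y \<noteq> 0"
    proof
      assume y0: "y = 0"
      obtain lam where "x = A *v lam" using surjA by blast
      hence "x \<bullet> x = (x v* A) \<bullet> lam" by (simp add: dot_lmul_matrix)
      also have "x v* A = y" unfolding y_def by (metis transpose_transpose vector_transpose_matrix)
      finally have "x \<bullet> x = 0" using y0 by simp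
      thus False using x by simp
    qed
    then obtain k where k: "y $ k \<noteq> 0" by (auto simp: vec_eq_iff)
    have "0 < d $ k * (y $ k)^2" using k dpos by simp
    also have "\<dots> \<le> (\<Sum>l\<in>UNIV. d$l * (y$l)^2)"
      by (rule member_le_sum) (use dpos in \<open>auto intro!: mult_nonneg_nonneg simp: less_imp_le\<close>)
    finally show ?thesis by (simp add: B_def BB_quad y_def)
  qed
  have detB: "det B > 0" by (rule posdef_det_pos) (rule pd)
  have invB: "invertible B" using detB by (simp add: invertible_det_nz)
  have symB: "transpose B = B" by (simp add: B_def BB_sym)
  define z where "z = matrix_inv B *v a"
  have Bz: "B *v z = a" unfolding z_def
    using invB by (simp only: matrix_vector_mul_assoc matrix_inv_props matrix_vector_mul_lid)
  have z0: "z \<noteq> 0" using Bz a_ne by auto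
  have aBa: "a \<bullet> z > 0" using pd[OF z0] Bz by (simp add: inner_commute)
  define g where "g = gam A u d l j"
  have g2: "g^2 = f * (a \<bullet> z)"
    unfolding g_def gam_def using f0 aBa
    by (simp add: f_def a_def z_def B_def)
  define c where "c = (2 / (real CARD('m) - 1)) * (1 / g^2)"
  have fc: "f * c * (a \<bullet> z) = 2 / (real CARD('m) - 1)"
    using f0 aBa by (simp add: c_def g2)
  have mm: "real CARD('m) \<ge> 2" using m2 by simp
  have alpha0: "\<alpha> > 0"
  proof -
    have "(real CARD('m) ^ 2 - 1) / real CARD('m) ^ 2 > 0"
    proof -
      have "2*2 \<le> real CARD('m) * real CARD('m)" using mm by (intro mult_mono) auto
      thus ?thesis by (simp add: power2_eq_square)
    qed
    thus ?thesis using alpha by linarith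
  qed
  define s where "s = f' * \<alpha> / f"
  have s0: "s > 0" using f0 alpha0 by (simp add: s_def)
  have d'e: "d' $ k = f' * \<alpha> * (d $ k / f + c * (if k = j then 1 else 0))" for k
  proof -
    have "((1 / f') *\<^sub>R d') $ k = (\<alpha> *\<^sub>R ((1 / f) *\<^sub>R d + c *\<^sub>R axis j (1::real))) $ k"
      using upd unfolding f_def[symmetric] f'_def[symmetric] g_def[symmetric] c_def[symmetric] by simp
    hence "d' $ k / f' = \<alpha> * (d $ k / f + c * (if k = j then 1 else 0))"
      by (simp add: axis_def)
    thus ?thesis using f0 by (simp add: field_simps)
  qed
  have B'e: "BB A d' = s *\<^sub>R (\<chi> i. row i B + ((f * c) *\<^sub>R a) $ i *s a)"
  proof -
    have "BB A d' $ i $ k = s * (B $ i $ k + f * c * A $ i $ j * A $ k $ j)" for i k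
    proof -
      have "BB A d' $ i $ k = (\<Sum>l\<in>UNIV. s * (A$i$l * d$l * A$k$l) + (f' * \<alpha> * c) * (if l = j then A$i$l * A$k$l else 0))"
        unfolding BB_entry by (rule sum.cong) (use f0 in \<open>auto simp: d'e s_def field_simps\<close>)
      also have "\<dots> = s * B $ i $ k + (f' * \<alpha> * c) * (A$i$j * A$k$j)"
        by (simp add: sum.distrib sum_distrib_left[symmetric] B_def BB_entry sum.delta')
      finally show ?thesis using f0 by (simp add: s_def field_simps)
    qed
    thus ?thesis by (simp add: vec_eq_iff row_def a_def column_def algebra_simps)
  qed
  define K where "K = (real CARD('m) + 1) / (real CARD('m) - 1)"
  have K0: "K > 0" using mm by (simp add: K_def)
  have detB': "det (BB A d') = s ^ CARD('n) * det B * K"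
  proof -
    have "det (BB A d') = s ^ CARD('n) * det (\<chi> i. row i B + ((f * c) *\<^sub>R a) $ i *s a)"
      by (simp add: B'e det_scaleR_mat)
    also have "det (\<chi> i. row i B + ((f * c) *\<^sub>R a) $ i *s a) = det B * (1 + ((f * c) *\<^sub>R a) \<bullet> z)"
      using det_rank1[OF invB, of "(f * c) *\<^sub>R a" a] by (simp add: symB z_def)
    also have "1 + ((f * c) *\<^sub>R a) \<bullet> z = K" using fc mm
      by (simp add: K_def field_simps)
    finally show ?thesis by simp
  qed
  define N where "N = real CARD('n)"
  have fin: "exp (1 / (2 * (real CARD('m) + 1))) \<le> \<alpha> powr (N/2) * sqrt K"
    unfolding K_def N_def using final_ineq[OF mm _ _ alpha] nm by simp
  define V where "V = f powr (N/2) / sqrt (det B)"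
  have V0: "V > 0" using f0 detB by (simp add: V_def)
  have volE: "volE A u d l = V" by (simp add: volE_def V_def f_def B_def N_def)
  have sq: "sqrt (s ^ CARD('n) * det B * K) = s powr (N/2) * sqrt (det B) * sqrt K"
  proof -
    have "sqrt (s ^ CARD('n)) = s powr (N/2)"
      using s0 by (simp add: N_def powr_half_sqrt_powr powr_realpow)
    thus ?thesis by (simp add: real_sqrt_mult)
  qed
  have spow: "s powr (N/2) = f' powr (N/2) * \<alpha> powr (N/2) / f powr (N/2)"
    using f0 alpha0 by (simp add: s_def powr_mult powr_divide)
  have volE': "volE A u d' l' = V / (\<alpha> powr (N/2) * sqrt K)"
    unfolding volE_def f'_def[symmetric] detB' N_def[symmetric] sq spow V_def
    using f0 alpha0 detB K0 by (simp add: field_simps)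
  have E0: "exp (1 / (2 * (real CARD('m) + 1))) > 0" by simp
  have "V / (\<alpha> powr (N/2) * sqrt K) \<le> V / exp (1 / (2 * (real CARD('m) + 1)))"
  proof -
    have P0: "\<alpha> powr (N/2) * sqrt K > 0" using alpha0 K0 by simp
    show ?thesis using fin V0 E0 P0 by (intro divide_left_mono) auto
  qed
  also have "\<dots> = exp (- 1 / (2 * (real CARD('m) + 1))) * V"
    by (simp add: exp_minus field_simps)
  finally show ?thesis using volE volE' by simp
qed

end
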